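(* Let $\mathcal{H}\subseteq\mathcal{Y}^{\mathcal{X}}$ be a hypothesis class and let $\mathcal{A}^{\mathrm{opt}}$ be the oracle learning algorithm with respect to $\mathcal{H}$. Assume that no two distinct groups share an oracle classifier, i.e. for $k\neq k'$ there is no $h\in\mathcal{H}$ that minimizes the expected 0-1 loss under both $D_k$ and $D_{k'}$. Assume that at each population state $\mathbf{p}$ the oracle classifier $h_{\mathbf{p}}\sim\mathcal{A}^{\mathrm{opt}}(D_{\mathbf{p}})$ is deployed, so that the evolutionary prediction game is $F_k(\mathbf{p})=\mathrm{acc}_k(h_{\mathbf{p}})$, and that $\mathbf{p}$ evolves according to population dynamics $\dot{\mathbf{p}}=V_F(\mathbf{p})$ as described in the context. Then: (1) Accuracy: overall accuracy is non-decreasing along trajectories, $\frac{d}{dt}\mathrm{acc}_{\mathbf{p}}(h_{\mathbf{p}})\ge 0$. (2) Stability: a stable equilibrium always exists, and there can be multiple such equilibria. (3) Competitive exclusion: every stable equilibrium $\mathbf{p}^*$ satisfies $|\mathrm{supp}(\mathbf{p}^* )|=1$. (4) Coexistence: equilibria with $|\mathrm{supp}(\mathbf{p}^* )|\ge 2$ may exist, but any such equilibrium is unstable.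
   Context: Setting: $\mathcal{X}$ is a feature space and $\mathcal{Y}$ a label set. There are $K$ groups; group $k\in[K]$ has a fixed distribution $D_k$ over $\mathcal{X}\times\mathcal{Y}$. A population state is $\mathbf{p}\in\Delta^K=\{\mathbf{p}\in\mathbb{R}^K:p_k\ge0,\sum_kp_k=1\}$, with mixture $D_{\mathbf{p}}=\sum_kp_kD_k$ and $\mathrm{supp}(\mathbf{p})=\{k:p_k>0\}$. For a classifier $h$, $\mathrm{acc}_D(h)=\Pr_{(x,y)\sim D}[h(x)=y]$, $\mathrm{acc}_k(h)=\mathrm{acc}_{D_k}(h)$, $\mathrm{acc}_{\mathbf{p}}(h)=\mathrm{acc}_{D_{\mathbf{p}}}(h)$. A learning algorithm $\mathcal{A}$ maps a distribution to a (possibly random) classifier; the evolutionary prediction game it induces is $F:\Delta^K\to\mathbb{R}^K$, $F_k(\mathbf{p})=\mathbb{E}_{h\sim\mathcal{A}(D_{\mathbf{p}})}[\mathrm{acc}_k(h)]$. A Nash equilibrium is $\mathbf{p}^*$ with $\mathrm{supp}(\mathbf{p}^* )\subseteq\arg\max_kF_k(\mathbf{p}^* )$; an equilibrium is called a coexistence equilibrium if $|\mathrm{supp}(\mathbf{p}^* )|\ge2$. Dynamics: $\dot{\mathbf{p}}=V_F(\mathbf{p})$ where $V_F:\Delta^K\to T\Delta^K=\{z\in\mathbb{R}^K:\sum_kz_k=0\}$ is continuous, satisfies positive correlation ($V_F(\mathbf{p})\cdot F(\mathbf{p})>0$ whenever $V_F(\mathbf{p})\ne0$), and either satisfies Nash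 stationarity (rest points are exactly the Nash equilibria of $F$) or is an imitative dynamic (e.g. the replicator dynamics $\dot p_k=p_k(F_k(\mathbf{p})-\sum_jp_jF_j(\mathbf{p}))$). An equilibrium is (evolutionarily) stable if it attracts all nearby population states under such dynamics, and unstable otherwise. Oracle algorithm: $\mathcal{A}^{\mathrm{opt}}(D)$ returns $h\in\arg\min_{h\in\mathcal{H}}\mathbb{E}_{(x,y)\sim D}[\mathbf{1}\{h(x)\ne y\}]$, assumed to exist, with ties broken consistently so that the fitness functions are continuous in $\mathbf{p}$. *)

theory Defs
  imports "HOL-Probability.Probability"
begin

text \<open>Groups are indexed by a finite type 'k (so K = CARD('k)); a population
 state is a vector in real ^ 'k lying in the probability simplex.\<close>

definition pop_simplex :: "(real ^ 'k::finite) set" where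
  "pop_simplex = {p. (\<forall>k. 0 \<le> p $ k) \<and> (\<Sum>k\<in>UNIV. p $ k) = 1}"

definition pop_supp :: "real ^ 'k::finite \<Rightarrow> 'k set" where
  "pop_supp p = {k. 0 < p $ k}"

definition acc :: "('x \<times> 'y) measure \<Rightarrow> ('x \<Rightarrow> 'y) \<Rightarrow> real" where
  "acc D h = measure D {z \<in> space D. h (fst z) = snd z}"

definition err :: "('x \<times> 'y) measure \<Rightarrow> ('x \<Rightarrow> 'y) \<Rightarrow> real" where
  "err D h = measure D {z \<in> space D. h (fst z) \<noteq> snd z}"

text \<open>Accuracy / expected 0-1 loss under the mixture D_p = sum_k p_k D_k
 (written out by linearity of the integral).\<close>

definition mix_acc :: "('k::finite \<Rightarrow> ('x \<times> 'y) measure) \<Rightarrow> real ^ 'k \<Rightarrow> ('x \<Rightarrow> 'y) \<Rightarrow> real" where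
  "mix_acc D p h = (\<Sum>k\<in>UNIV. p $ k * acc (D k) h)"

definition mix_err :: "('k::finite \<Rightarrow> ('x \<times> 'y) measure) \<Rightarrow> real ^ 'k \<Rightarrow> ('x \<Rightarrow> 'y) \<Rightarrow> real" where
  "mix_err D p h = (\<Sum>k\<in>UNIV. p $ k * err (D k) h)"

definition oracle_set :: "('x \<Rightarrow> 'y) set \<Rightarrow> ('x \<times> 'y) measure \<Rightarrow> ('x \<Rightarrow> 'y) set" where
  "oracle_set H D = {h \<in> H. \<forall>h'\<in>H. err D h \<le> err D h'}"

text \<open>The deployed (deterministic, consistently tie-broken) oracle classifier
 h_p = sel p must minimise the 0-1 loss under D_p for every state p.\<close>

definition oracle_selection ::
  "('k::finite \<Rightarrow> ('x \<times> 'y) measure) \<Rightarrow> ('x \<Rightarrow> 'y) set \<Rightarrow> (real ^ 'k \<Rightarrow> ('x \<Rightarrow> 'y)) \<Rightarrow> bool" where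
  "oracle_selection D H sel \<longleftrightarrow>
     (\<forall>p\<in>pop_simplex. sel p \<in> H \<and> (\<forall>h\<in>H. mix_err D p (sel p) \<le> mix_err D p h))"

definition fitness ::
  "('k::finite \<Rightarrow> ('x \<times> 'y) measure) \<Rightarrow> (real ^ 'k \<Rightarrow> ('x \<Rightarrow> 'y)) \<Rightarrow> real ^ 'k \<Rightarrow> real ^ 'k" where
  "fitness D sel p = (\<chi> k. acc (D k) (sel p))"

definition no_shared_oracle :: "('k \<Rightarrow> ('x \<times> 'y) measure) \<Rightarrow> ('x \<Rightarrow> 'y) set \<Rightarrow> bool" where
  "no_shared_oracle D H \<longleftrightarrow>
     (\<forall>k k'. k \<noteq> k' \<longrightarrow> \<not> (\<exists>h. h \<in> oracle_set H (D k) \<and> h \<in> oracle_set H (D k')))"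

definition oracle_game ::
  "('k::finite \<Rightarrow> ('x \<times> 'y) measure) \<Rightarrow> ('x \<Rightarrow> 'y) set \<Rightarrow> (real ^ 'k \<Rightarrow> ('x \<Rightarrow> 'y)) \<Rightarrow> bool" where
  "oracle_game D H sel \<longleftrightarrow>
     (\<forall>k. prob_space (D k)) \<and>
     (\<forall>k. \<forall>h\<in>H. {z \<in> space (D k). h (fst z) = snd z} \<in> sets (D k)) \<and>
     no_shared_oracle D H \<and>
     oracle_selection D H sel \<and>
     continuous_on pop_simplex (fitness D sel)"

definition nash_eq :: "(real ^ 'k::finite \<Rightarrow> real ^ 'k) \<Rightarrow> real ^ 'k \<Rightarrow> bool" where
  "nash_eq F p \<longleftrightarrow> p \<in> pop_simplex \<and> (\<forall>k\<in>pop_supp p. \<forall>j. F p $ j \<le> F p $ k)"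

definition nash_stationary :: "(real ^ 'k::finite \<Rightarrow> real ^ 'k) \<Rightarrow> (real ^ 'k \<Rightarrow> real ^ 'k) \<Rightarrow> bool" where
  "nash_stationary F V \<longleftrightarrow> (\<forall>p\<in>pop_simplex. V p = 0 \<longleftrightarrow> nash_eq F p)"

text \<open>The replicator dynamics is the case
 G_k(p) = F_k(p) - sum_j p_j F_j(p).\<close>

definition imitative :: "(real ^ 'k::finite \<Rightarrow> real ^ 'k) \<Rightarrow> (real ^ 'k \<Rightarrow> real ^ 'k) \<Rightarrow> bool" where
  "imitative F V \<longleftrightarrow>
     (\<exists>G :: real ^ 'k \<Rightarrow> real ^ 'k. continuous_on pop_simplex G \<and>
        (\<forall>p\<in>pop_simplex. \<forall>k. V p $ k = p $ k * G p $ k) \<and>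
        (\<forall>p\<in>pop_simplex. \<forall>i j. G p $ i \<le> G p $ j \<longleftrightarrow> F p $ i \<le> F p $ j))"

definition dyn_solution :: "(real ^ 'k::finite \<Rightarrow> real ^ 'k) \<Rightarrow> (real \<Rightarrow> real ^ 'k) \<Rightarrow> bool" where
  "dyn_solution V x \<longleftrightarrow>
     (\<forall>t\<ge>0. x t \<in> pop_simplex) \<and>
     (\<forall>t\<ge>0. (x has_vector_derivative V (x t)) (at t within {0..}))"

definition admissible_dynamics :: "(real ^ 'k::finite \<Rightarrow> real ^ 'k) \<Rightarrow> (real ^ 'k \<Rightarrow> real ^ 'k) \<Rightarrow> bool" where
  "admissible_dynamics F V \<longleftrightarrow>
     continuous_on pop_simplex V \<and>
     (\<forall>p\<in>pop_simplex. (\<Sum>k\<in>UNIV. V p $ k) = 0) \<and>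
     (\<forall>p\<in>pop_simplex. V p \<noteq> 0 \<longrightarrow> V p \<bullet> F p > 0) \<and>
     (nash_stationary F V \<or> imitative F V) \<and>
     (\<forall>x0\<in>pop_simplex. \<exists>x. dyn_solution V x \<and> x 0 = x0)"

definition stable_eq :: "(real ^ 'k::finite \<Rightarrow> real ^ 'k) \<Rightarrow> (real ^ 'k \<Rightarrow> real ^ 'k) \<Rightarrow> real ^ 'k \<Rightarrow> bool" where
  "stable_eq F V q \<longleftrightarrow> nash_eq F q \<and>
     (\<exists>\<epsilon>>0. \<forall>x. dyn_solution V x \<and> dist (x 0) q < \<epsilon> \<longrightarrow> (x \<longlongrightarrow> q) at_top)"

end

theory Submission
  imports Defs
begin


definition vert :: "'k \<Rightarrow> real ^ 'k::finite" where
  "vert k = (\<chi> j. if j = k then 1 else 0)"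

lemma comp_deriv: fixes x :: "real \<Rightarrow> real ^ 'k::finite"
  assumes "(x has_vector_derivative v) (at t within S)"
  shows "((\<lambda>s. x s $ j) has_real_derivative v $ j) (at t within S)"
  unfolding has_real_derivative_iff_has_vector_derivative
  by (rule bounded_linear.has_vector_derivative[OF bounded_linear_vec_nth assms])

lemma min_le_div_le_max:
  fixes lo N hi d :: real
  assumes "lo \<le> N" "N \<le> hi" "d \<noteq> 0"
  shows "min (lo/d) (hi/d) \<le> N/d \<and> N/d \<le> max (lo/d) (hi/d)"
proof (cases "d > 0")
  case True
  then show ?thesis using assms by (auto simp: divide_right_mono min_le_iff_disj le_max_iff_disj)
next
  case False
  then have "d < 0" using assms by auto
  then show ?thesis using assms by (auto simp: divide_right_mono_neg min_le_iff_disj le_max_iff_disj)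
qed

lemma inner_div_sum: fixes u G :: "real ^ 'k::finite"
  shows "(u \<bullet> G) / d = (\<Sum>j\<in>UNIV. (u $ j / d) * G $ j)"
  by (simp add: inner_vec_def sum_divide_distrib)

lemma sol_cont: assumes "dyn_solution V x" shows "continuous_on {0..} x"
  using assms unfolding dyn_solution_def
  by (auto simp: continuous_on_eq_continuous_within intro: has_vector_derivative_continuous)

lemma vert_nth: "vert k $ j = (if j = k then 1 else 0)"
  by (simp add: vert_def)

lemma vert_simplex: "vert k \<in> pop_simplex"
  by (simp add: pop_simplex_def vert_nth)

lemma vert_supp: "pop_supp (vert k) = {k}"
  by (auto simp: pop_supp_def vert_nth)

lemma inner_vert: "vert k \<bullet> G = G $ k"
proof -
  have "vert k \<bullet> G = (\<Sum>i\<in>UNIV. if i = k then G $ i else 0)"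
    unfolding inner_vec_def by (rule sum.cong) (auto simp: vert_nth)
  then show ?thesis by simp
qed

lemma simplex_nonneg: "p \<in> pop_simplex \<Longrightarrow> 0 \<le> p $ j"
  by (simp add: pop_simplex_def)

lemma simplex_sum: "p \<in> pop_simplex \<Longrightarrow> (\<Sum>j\<in>UNIV. p $ j) = 1"
  by (simp add: pop_simplex_def)

lemma simplex_le1: assumes "p \<in> pop_simplex" shows "p $ j \<le> 1"
proof -
  have "p $ j \<le> (\<Sum>i\<in>UNIV. p $ i)"
    by (rule member_le_sum) (auto simp: simplex_nonneg[OF assms])
  then show ?thesis using simplex_sum[OF assms] by simp
qed

lemma simplex_other:
  assumes "p \<in> pop_simplex" "p $ k < 1"
  shows "\<exists>j. j \<noteq> k \<and> 0 < p $ j"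
proof (rule ccontr)
  assume nt: "\<not> ?thesis"
  have z: "p $ j = 0" if "j \<noteq> k" for j
    using nt simplex_nonneg[OF assms(1), of j] that by (auto simp: le_less)
  have "(\<Sum>j\<in>UNIV. p $ j) = (\<Sum>j\<in>UNIV. if j = k then p $ k else 0)"
    by (rule sum.cong) (auto simp: z)
  also have "\<dots> = p $ k" by simp
  finally show False using simplex_sum[OF assms(1)] assms(2) by simp
qed

lemma dist_vert:
  assumes "p \<in> pop_simplex"
  shows "dist p (vert k) \<le> 2 * (1 - p $ k)"
proof -
  have "dist p (vert k) = norm (p - vert k)" by (simp add: dist_norm)
  also have "\<dots> \<le> (\<Sum>j\<in>UNIV. \<bar>(p - vert k) $ j\<bar>)" by (rule norm_le_l1_cart)
  also have "\<dots> = (\<Sum>j\<in>UNIV. p $ j + (if j = k then 1 - 2 * p $ k else 0))"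
  proof (rule sum.cong)
    fix j assume "j \<in> (UNIV :: 'a set)"
    show "\<bar>(p - vert k) $ j\<bar> = p $ j + (if j = k then 1 - 2 * p $ k else 0)"
      using simplex_nonneg[OF assms, of j] simplex_le1[OF assms, of j] by (auto simp: vert_nth)
  qed simp
  also have "\<dots> = 2 * (1 - p $ k)"
    by (simp add: sum.distrib simplex_sum[OF assms])
  finally show ?thesis .
qed

lemma comp_dist: "\<bar>p $ k - q $ k\<bar> \<le> dist p q"
  using component_le_norm_cart[of "p - q" k] by (simp add: dist_norm)

lemma compact_psimplex: "compact (pop_simplex :: (real ^ 'k::finite) set)"
proof (rule compact_eq_bounded_closed[THEN iffD2], rule conjI)
  show "bounded (pop_simplex :: (real ^ 'k) set)"
    unfolding bounded_iff
  proof (intro exI ballI)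
    fix p :: "real ^ 'k" assume p: "p \<in> pop_simplex"
    have "norm p \<le> (\<Sum>j\<in>UNIV. \<bar>p $ j\<bar>)" by (rule norm_le_l1_cart)
    also have "\<dots> = 1" using simplex_sum[OF p] simplex_nonneg[OF p] by simp
    finally show "norm p \<le> 1" .
  qed
  have "pop_simplex = (\<Inter>j. {p :: real ^ 'k. 0 \<le> p $ j}) \<inter> {p. (\<Sum>j\<in>UNIV. p $ j) = 1}"
    by (auto simp: pop_simplex_def)
  also have "closed \<dots>"
    by (intro closed_Int closed_INT ballI closed_Collect_le closed_Collect_eq continuous_intros)
  finally show "closed (pop_simplex :: (real ^ 'k) set)" .
qed

lemma compact_slab: "compact {p \<in> (pop_simplex :: (real ^ 'k::finite) set). lo \<le> p $ k \<and> p $ k \<le> hi}"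
proof -
  have "{p \<in> (pop_simplex :: (real ^ 'k) set). lo \<le> p $ k \<and> p $ k \<le> hi} =
     pop_simplex \<inter> ({p. lo \<le> p $ k} \<inter> {p. p $ k \<le> hi})" by auto
  also have "compact \<dots>"
    by (intro compact_Int_closed compact_psimplex closed_Int closed_Collect_le continuous_intros)
  finally show ?thesis .
qed

lemma compact_max_lt:
  fixes f :: "'a::topological_space \<Rightarrow> real"
  assumes "compact C" "continuous_on C f" "\<And>p. p \<in> C \<Longrightarrow> f p < M"
  shows "\<exists>m<M. \<forall>p\<in>C. f p \<le> m"
proof (cases "C = {}")
  case True then show ?thesis by (intro exI[of _ "M - 1"]) auto
next
  case False
  obtain s where "s \<in> C" "\<forall>t\<in>C. f t \<le> f s" using continuous_attains_sup[OF assms(1) False assms(2)] by blast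
  then show ?thesis using assms(3) by blast
qed

lemma compact_min_pos:
  fixes f :: "'a::topological_space \<Rightarrow> real"
  assumes "compact C" "continuous_on C f" "\<And>p. p \<in> C \<Longrightarrow> f p > 0"
  shows "\<exists>c>0. \<forall>p\<in>C. c \<le> f p"
proof (cases "C = {}")
  case True then show ?thesis by (intro exI[of _ 1]) auto
next
  case False
  obtain s where "s \<in> C" "\<forall>t\<in>C. f s \<le> f t" using continuous_attains_inf[OF assms(1) False assms(2)] by blast
  then show ?thesis using assms(3) by blast
qed

locale agame =
  fixes F V :: "real ^ 'k::finite \<Rightarrow> real ^ 'k"
  assumes Fc: "continuous_on pop_simplex F"
  and star: "\<lbrakk>p \<in> pop_simplex; p' \<in> pop_simplex\<rbrakk> \<Longrightarrow> p \<bullet> F p' \<le> p \<bullet> F p"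
  and ns: "\<lbrakk>p \<in> pop_simplex; i \<noteq> j\<rbrakk> \<Longrightarrow> F p $ i < F (vert i) $ i \<or> F p $ j < F (vert j) $ j"
  and adm: "admissible_dynamics F V"
begin

definition Phi :: "real ^ 'k \<Rightarrow> real" where "Phi p = p \<bullet> F p"

lemma Phi_cont: "continuous_on pop_simplex Phi"
  unfolding Phi_def by (intro continuous_intros Fc)

lemma Phi_deriv:
  assumes sol: "dyn_solution V x" and t: "t \<ge> 0"
  shows "((\<lambda>s. Phi (x s)) has_real_derivative (V (x t) \<bullet> F (x t))) (at t within {0..})"
proof -
  define y where "y = x t"
  have xd: "(x has_vector_derivative V y) (at t within {0..})"
    using sol t unfolding dyn_solution_def y_def by auto
  have xS: "\<And>s. s \<ge> 0 \<Longrightarrow> x s \<in> pop_simplex" using sol unfolding dyn_solution_def by auto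
  have xc: "continuous_on {0..} x" by (rule sol_cont[OF sol])
  have "continuous_on {0..} (F \<circ> x)"
    by (rule continuous_on_compose[OF xc continuous_on_subset[OF Fc]]) (auto simp: xS)
  then have Fxt: "((\<lambda>s. F (x s)) \<longlongrightarrow> F y) (at t within {0..})"
    using t unfolding continuous_on_def y_def by (auto simp: o_def)
  have comp: "((\<lambda>s. (x s - y) $ j / (s - t)) \<longlongrightarrow> V y $ j) (at t within {0..})" for j
    using comp_deriv[OF xd, of j] unfolding has_field_derivative_iff y_def by simp
  define A where "A s = ((x s - y) \<bullet> F y) / (s - t)" for s
  define B where "B s = ((x s - y) \<bullet> F (x s)) / (s - t)" for s
  have "(A \<longlongrightarrow> V y \<bullet> F y) (at t within {0..})"
    unfolding A_def inner_div_sum unfolding inner_vec_def inner_real_def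
    by (intro tendsto_sum tendsto_mult comp tendsto_const) 
  have "(B \<longlongrightarrow> V y \<bullet> F y) (at t within {0..})"
    unfolding B_def inner_div_sum unfolding inner_vec_def inner_real_def
    by (intro tendsto_sum tendsto_mult comp tendsto_vec_nth Fxt) 
  have key: "min (A s) (B s) \<le> (Phi (x s) - Phi y) / (s - t) \<and> (Phi (x s) - Phi y) / (s - t) \<le> max (A s) (B s)"
    if "s \<ge> 0" "s \<noteq> t" for s
  proof -
    have yS: "y \<in> pop_simplex" using xS t y_def by auto
    have "(x s - y) \<bullet> F y \<le> Phi (x s) - Phi y"
      using star[OF xS[OF that(1)] yS] unfolding Phi_def by (simp add: inner_diff_left)
    moreover have "Phi (x s) - Phi y \<le> (x s - y) \<bullet> F (x s)"
      using star[OF yS xS[OF that(1)]] unfolding Phi_def by (simp add: inner_diff_left)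
    ultimately show ?thesis unfolding A_def B_def
      by (rule min_le_div_le_max) (use that in auto)
  qed
  show ?thesis
    unfolding has_field_derivative_iff y_def[symmetric]
  proof (rule tendsto_sandwich)
    show "\<forall>\<^sub>F s in at t within {0..}. min (A s) (B s) \<le> (Phi (x s) - Phi y) / (s - t)"
      unfolding eventually_at_filter by (rule always_eventually) (use key in auto)
    show "\<forall>\<^sub>F s in at t within {0..}. (Phi (x s) - Phi y) / (s - t) \<le> max (A s) (B s)"
      unfolding eventually_at_filter by (rule always_eventually) (use key in auto)
    show "((\<lambda>s. min (A s) (B s)) \<longlongrightarrow> V y \<bullet> F y) (at t within {0..})"
      using \<open>(A \<longlongrightarrow> _) _\<close> \<open>(B \<longlongrightarrow> _) _\<close> using tendsto_min[of A "V y \<bullet> F y" _ B "V y \<bullet> F y"] by simp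
    show "((\<lambda>s. max (A s) (B s)) \<longlongrightarrow> V y \<bullet> F y) (at t within {0..})"
      using \<open>(A \<longlongrightarrow> _) _\<close> \<open>(B \<longlongrightarrow> _) _\<close> using tendsto_max[of A "V y \<bullet> F y" _ B "V y \<bullet> F y"] by simp
  qed
qed

lemma sol_in: "dyn_solution V x \<Longrightarrow> s \<ge> 0 \<Longrightarrow> x s \<in> pop_simplex"
  unfolding dyn_solution_def by auto

lemma Phi_sol_cont: assumes "dyn_solution V x" shows "continuous_on {0..} (\<lambda>s. Phi (x s))"
proof -
  have "continuous_on {0..} (Phi \<circ> x)"
    by (rule continuous_on_compose[OF sol_cont[OF assms] continuous_on_subset[OF Phi_cont]])
       (auto simp: sol_in[OF assms])
  then show ?thesis by (simp add: o_def)
qed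

lemma Phi_deriv_at:
  assumes "dyn_solution V x" "t > 0"
  shows "((\<lambda>s. Phi (x s)) has_real_derivative (V (x t) \<bullet> F (x t))) (at t)"
proof -
  have "t \<in> interior {0..}" using assms by simp
  then have "at t within {0..} = at t" by (rule at_within_interior)
  then show ?thesis using Phi_deriv[OF assms(1), of t] assms(2) by simp
qed

lemma VF_nonneg: "p \<in> pop_simplex \<Longrightarrow> V p \<bullet> F p \<ge> 0"
  using adm unfolding admissible_dynamics_def by (cases "V p = 0") (auto intro: less_imp_le)

lemma Phi_growth:
  assumes sol: "dyn_solution V x" and ab: "0 \<le> a" "a \<le> b"
    and c: "\<And>s. a < s \<Longrightarrow> s < b \<Longrightarrow> V (x s) \<bullet> F (x s) \<ge> c"
  shows "Phi (x b) - Phi (x a) \<ge> c * (b - a)"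
proof (cases "a = b")
  case True then show ?thesis by simp
next
  case False
  then have lt: "a < b" using ab by simp
  have "continuous_on {a..b} (\<lambda>s. Phi (x s))"
    by (rule continuous_on_subset[OF Phi_sol_cont[OF sol]]) (use ab in auto)
  moreover have "(\<lambda>s. Phi (x s)) differentiable (at z)" if "a < z" "z < b" for z
    using Phi_deriv_at[OF sol, of z] that ab real_differentiable_def by force
  ultimately obtain l z where z: "a < z" "z < b" "DERIV (\<lambda>s. Phi (x s)) z :> l"
    "Phi (x b) - Phi (x a) = (b - a) * l"
    using MVT[OF lt] by blast
  have "l = V (x z) \<bullet> F (x z)"
    using DERIV_unique[OF z(3) Phi_deriv_at[OF sol]] z ab by simp
  then have "l \<ge> c" using c z by simp
  then show ?thesis using z(4) lt by (simp add: mult.commute mult_left_mono)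
qed

lemma Phi_mono:
  assumes sol: "dyn_solution V x"
  shows "mono_on {0..} (\<lambda>t. Phi (x t))"
proof (rule mono_onI)
  fix a b :: real assume "a \<in> {0..}" "b \<in> {0..}" "a \<le> b"
  then show "Phi (x a) \<le> Phi (x b)"
    using Phi_growth[OF sol, of a b 0] VF_nonneg sol_in[OF sol] by force
qed

lemma F_le_a: "p \<in> pop_simplex \<Longrightarrow> F p $ i \<le> F (vert i) $ i"
  using star[OF vert_simplex, of p i] by (simp add: inner_vert)

lemma VFc: "continuous_on pop_simplex (\<lambda>p. V p \<bullet> F p)"
  using adm Fc unfolding admissible_dynamics_def by (auto intro: continuous_intros)

lemma Phi_vert: "Phi (vert k) = F (vert k) $ k"
  by (simp add: Phi_def inner_vert)

lemma Phi_expand: "Phi p = (\<Sum>i\<in>UNIV. p $ i * F p $ i)"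
  by (simp add: Phi_def inner_vec_def)

context
  fixes k assumes kmax: "\<And>j. F (vert j) $ j \<le> F (vert k) $ k"
begin

lemma vert_strict: assumes "j \<noteq> k" shows "F (vert k) $ j < F (vert k) $ k"
proof -
  have "F (vert k) $ k < F (vert k) $ k \<or> F (vert k) $ j < F (vert j) $ j"
    using ns[of "vert k" k j] vert_simplex[of k] assms by auto
  then show ?thesis using kmax[of j] by auto
qed

lemma vert_nash: "nash_eq F (vert k)"
  unfolding nash_eq_def vert_supp
proof (intro conjI ballI allI)
  fix i j assume "i \<in> {k}"
  then show "F (vert k) $ j \<le> F (vert k) $ i"
    using vert_strict[of j] by (cases "j = k") auto
qed (rule vert_simplex)

lemma Phi_le: assumes p: "p \<in> pop_simplex" shows "Phi p \<le> F (vert k) $ k"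
proof -
  have "Phi p \<le> (\<Sum>i\<in>UNIV. p $ i * F (vert k) $ k)"
    unfolding Phi_expand
    by (rule sum_mono, rule mult_left_mono) (use F_le_a[OF p] kmax simplex_nonneg[OF p] order_trans in blast)+
  also have "\<dots> = F (vert k) $ k" using simplex_sum[OF p] by (simp add: sum_distrib_right[symmetric])
  finally show ?thesis .
qed

lemma Phi_lt: assumes p: "p \<in> pop_simplex" "0 < p $ k" "p $ k < 1"
  shows "Phi p < F (vert k) $ k"
proof -
  define a where "a = F (vert k) $ k"
  obtain j where j: "j \<noteq> k" "0 < p $ j" using simplex_other[OF p(1) p(3)] by blast
  obtain i where i: "0 < p $ i" "F p $ i < a"
    using ns[OF p(1) j(1)[symmetric]] kmax[of j] j p(2) unfolding a_def by force
  have nn: "\<And>l. 0 \<le> p $ l * (a - F p $ l)"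
    using F_le_a[OF p(1)] kmax simplex_nonneg[OF p(1)] unfolding a_def
    by (meson diff_ge_0_iff_ge mult_nonneg_nonneg order_trans)
  have "0 < p $ i * (a - F p $ i)" using i by simp
  also have "\<dots> \<le> (\<Sum>l\<in>UNIV. p $ l * (a - F p $ l))"
    by (rule member_le_sum) (use nn in auto)
  also have "\<dots> = a - Phi p"
    using simplex_sum[OF p(1)]
    by (simp add: Phi_expand right_diff_distrib sum_subtractf sum_distrib_right[symmetric])
  finally show ?thesis unfolding a_def by simp
qed

lemma nbhd: "\<exists>r>0. r < 1 \<and> (\<forall>p\<in>pop_simplex. 1 - r \<le> p $ k \<longrightarrow> (\<forall>j. j \<noteq> k \<longrightarrow> F p $ j < F p $ k))"
proof -
  have "\<forall>\<^sub>F p in at (vert k) within pop_simplex. j \<noteq> k \<longrightarrow> F p $ j < F p $ k" for j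
  proof (cases "j = k")
    case False
    have "((\<lambda>p. F p $ k - F p $ j) \<longlongrightarrow> F (vert k) $ k - F (vert k) $ j) (at (vert k) within pop_simplex)"
      using Fc vert_simplex unfolding continuous_on_def
      by (intro tendsto_diff tendsto_vec_nth) auto
    moreover have "0 < F (vert k) $ k - F (vert k) $ j" using vert_strict[OF False] by simp
    ultimately have "\<forall>\<^sub>F p in at (vert k) within pop_simplex. 0 < F p $ k - F p $ j"
      by (rule order_tendstoD(1))
    then show ?thesis by eventually_elim simp
  qed simp
  then have "\<forall>\<^sub>F p in at (vert k) within pop_simplex. \<forall>j. j \<noteq> k \<longrightarrow> F p $ j < F p $ k"
    by (simp add: eventually_all_finite)
  then obtain d where d: "d > 0" "\<And>p. p \<in> pop_simplex \<Longrightarrow> p \<noteq> vert k \<Longrightarrow> dist p (vert k) < d \<Longrightarrow>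
      (\<forall>j. j \<noteq> k \<longrightarrow> F p $ j < F p $ k)"
    unfolding eventually_at by blast
  define r where "r = min (d / 3) (1/2)"
  have "r > 0" "r < 1" using d(1) by (auto simp: r_def)
  moreover have "\<forall>j. j \<noteq> k \<longrightarrow> F p $ j < F p $ k" if "p \<in> pop_simplex" "1 - r \<le> p $ k" for p
  proof (cases "p = vert k")
    case True then show ?thesis using vert_strict by simp
  next
    case False
    have "dist p (vert k) \<le> 2 * (1 - p $ k)" by (rule dist_vert[OF that(1)])
    also have "\<dots> \<le> 2 * r" using that(2) by simp
    also have "\<dots> < d" using d(1) by (simp add: r_def)
    finally show ?thesis using d(2)[OF that(1) False] by blast
  qed
  ultimately show ?thesis by blast
qed

lemma rest_free:
  assumes p: "p \<in> pop_simplex" "0 < p $ k" "p $ k < 1" and dom: "\<forall>j. j \<noteq> k \<longrightarrow> F p $ j < F p $ k"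
  shows "V p \<noteq> 0"
proof
  assume V0: "V p = 0"
  obtain j where j: "j \<noteq> k" "0 < p $ j" using simplex_other[OF p(1) p(3)] by blast
  have "nash_stationary F V \<or> imitative F V" using adm unfolding admissible_dynamics_def by blast
  then show False
  proof
    assume "nash_stationary F V"
    then have "nash_eq F p" using V0 p(1) unfolding nash_stationary_def by blast
    then have "F p $ k \<le> F p $ j" using j unfolding nash_eq_def pop_supp_def by blast
    then show False using dom j by force
  next
    assume "imitative F V"
    then obtain G where G: "\<forall>p\<in>pop_simplex. \<forall>k. V p $ k = p $ k * G p $ k"
      "\<forall>p\<in>pop_simplex. \<forall>i j. G p $ i \<le> G p $ j \<longleftrightarrow> F p $ i \<le> F p $ j"
      unfolding imitative_def by blast
    have "G p $ k = 0" using G(1) p V0 by (metis mult_eq_0_iff order_less_irrefl zero_index)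
    moreover have "G p $ j = 0" using G(1) p(1) j V0 by (metis mult_eq_0_iff order_less_irrefl zero_index)
    ultimately have "F p $ k \<le> F p $ j" using G(2) p(1) by (metis order_refl)
    then show False using dom j by force
  qed
qed

lemma Phi_near:
  assumes "M < F (vert k) $ k"
  shows "\<exists>\<delta>>0. \<forall>p\<in>pop_simplex. 1 - \<delta> < p $ k \<longrightarrow> M < Phi p"
proof -
  obtain d where d: "d > 0" "\<forall>p\<in>pop_simplex. dist p (vert k) < d \<longrightarrow> dist (Phi p) (Phi (vert k)) < F (vert k) $ k - M"
    using Phi_cont vert_simplex assms unfolding continuous_on_iff
    by (metis diff_gt_0_iff_gt)
  show ?thesis
  proof (intro exI[of _ "d/3"] conjI ballI impI)
    show "d / 3 > 0" using d by simp
    fix p assume p: "p \<in> pop_simplex" "1 - d / 3 < p $ k"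
    have "dist p (vert k) \<le> 2 * (1 - p $ k)" by (rule dist_vert[OF p(1)])
    also have "\<dots> < d" using p(2) d(1) by simp
    finally have "dist (Phi p) (Phi (vert k)) < F (vert k) $ k - M" using d(2) p(1) by blast
    then show "M < Phi p" unfolding Phi_vert dist_real_def by linarith
  qed
qed

lemma vert_stable: "stable_eq F V (vert k)"
proof -
  define a where "a = F (vert k) $ k"
  define slab where "slab lo hi = {p \<in> pop_simplex. lo \<le> p $ k \<and> p $ k \<le> hi}" for lo hi
  obtain r where r: "r > 0" "r < 1" "\<forall>p\<in>pop_simplex. 1 - r \<le> p $ k \<longrightarrow> (\<forall>j. j \<noteq> k \<longrightarrow> F p $ j < F p $ k)"
    using nbhd by blast
  have slab_max: "\<exists>m<a. \<forall>p\<in>slab lo hi. Phi p \<le> m" if "0 < lo" "hi < 1" for lo hi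
    unfolding slab_def
    by (rule compact_max_lt[OF compact_slab continuous_on_subset[OF Phi_cont]])
       (use Phi_lt that a_def in auto)
  obtain m1 where m1: "m1 < a" "\<forall>p\<in>slab (1 - r) (1 - r/2). Phi p \<le> m1"
    using slab_max[of "1 - r" "1 - r/2"] r by auto
  obtain \<delta>1 where \<delta>1: "\<delta>1 > 0" "\<forall>p\<in>pop_simplex. 1 - \<delta>1 < p $ k \<longrightarrow> m1 < Phi p"
    using Phi_near[of m1] m1 a_def by blast
  define \<epsilon> where "\<epsilon> = min \<delta>1 (r/2)"
  have "\<epsilon> > 0" using \<delta>1 r by (simp add: \<epsilon>_def)
  have conv: "(x \<longlongrightarrow> vert k) at_top"
    if sol: "dyn_solution V x" and x0: "dist (x 0) (vert k) < \<epsilon>" for x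
  proof -
    have xS: "\<And>t. t \<ge> 0 \<Longrightarrow> x t \<in> pop_simplex" using sol_in[OF sol] .
    have mono: "\<And>s t. 0 \<le> s \<Longrightarrow> s \<le> t \<Longrightarrow> Phi (x s) \<le> Phi (x t)"
      using Phi_mono[OF sol] by (auto simp: mono_on_def)
    have "\<bar>x 0 $ k - vert k $ k\<bar> < \<epsilon>" using comp_dist[of "x 0" k "vert k"] x0 by linarith
    then have x0k: "1 - \<epsilon> < x 0 $ k" by (simp add: vert_nth)
    have Phi0: "m1 < Phi (x 0)" using \<delta>1(2) xS[of 0] x0k by (simp add: \<epsilon>_def)
    have stay: "1 - r/2 < x t $ k" if t0: "t \<ge> 0" for t
    proof (rule ccontr)
      assume "\<not> ?thesis"
      then have le: "x t $ k \<le> 1 - r/2" by simp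
      have "continuous_on {0..t} x" by (rule continuous_on_subset[OF sol_cont[OF sol]]) auto
      then have "continuous_on {0..t} (\<lambda>s. x s $ k)"
        by (rule bounded_linear.continuous_on[OF bounded_linear_vec_nth])
      moreover have "1 - r/2 \<le> x 0 $ k" using x0k by (simp add: \<epsilon>_def)
      ultimately obtain s where s: "0 \<le> s" "s \<le> t" "x s $ k = 1 - r/2"
        using IVT2'[of "\<lambda>s. x s $ k" t "1 - r/2" 0] le t0 by auto
      then have "x s \<in> slab (1 - r) (1 - r/2)" using xS[of s] r by (simp add: slab_def)
      then have "Phi (x s) \<le> m1" using m1 by blast
      moreover have "Phi (x 0) \<le> Phi (x s)" using mono s by simp
      ultimately show False using Phi0 by simp
    qed
    have ev: "\<exists>T. \<forall>t\<ge>T. 1 - \<delta> < x t $ k" if \<delta>: "0 < \<delta>" "\<delta> \<le> r/2" for \<delta>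
    proof (rule ccontr)
      assume "\<not> ?thesis"
      then have freq: "\<And>T. \<exists>t\<ge>T. x t $ k \<le> 1 - \<delta>" by (meson not_le)
      obtain m2 where m2: "m2 < a" "\<forall>p\<in>slab (1 - r) (1 - \<delta>). Phi p \<le> m2"
        using slab_max[of "1 - r" "1 - \<delta>"] r \<delta> by auto
      have allle: "Phi (x t) \<le> m2" if "t \<ge> 0" for t
      proof -
        obtain t' where t': "t' \<ge> t" "x t' $ k \<le> 1 - \<delta>" using freq by blast
        have "x t' \<in> slab (1 - r) (1 - \<delta>)"
          using xS[of t'] stay[of t'] t' that r unfolding slab_def by auto
        then have "Phi (x t') \<le> m2" using m2 by blast
        moreover have "Phi (x t) \<le> Phi (x t')" using mono t' that by simp
        ultimately show ?thesis by simp
      qed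
      obtain \<delta>2 where \<delta>2: "\<delta>2 > 0" "\<forall>p\<in>pop_simplex. 1 - \<delta>2 < p $ k \<longrightarrow> m2 < Phi p"
        using Phi_near[of m2] m2 a_def by blast
      define \<delta>3 where "\<delta>3 = min \<delta>2 \<delta>"
      have "\<delta>3 > 0" using \<delta>2 \<delta> by (simp add: \<delta>3_def)
      have in3: "x t \<in> slab (1 - r) (1 - \<delta>3)" if "t \<ge> 0" for t
      proof -
        have "x t $ k \<le> 1 - \<delta>3"
        proof (rule ccontr)
          assume "\<not> ?thesis"
          then have "1 - \<delta>2 < x t $ k" by (simp add: \<delta>3_def)
          then have "m2 < Phi (x t)" using \<delta>2 xS[OF that] by blast
          then show False using allle[OF that] by simp
        qed
        then show ?thesis using xS[OF that] stay[OF that] r unfolding slab_def by auto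
      qed
      have pos: "V p \<bullet> F p > 0" if "p \<in> slab (1 - r) (1 - \<delta>3)" for p
      proof -
        have p: "p \<in> pop_simplex" "0 < p $ k" "p $ k < 1" "1 - r \<le> p $ k"
          using that r \<open>\<delta>3 > 0\<close> unfolding slab_def by auto
        have "V p \<noteq> 0" by (rule rest_free) (use p r in auto)
        then show ?thesis using adm p(1) unfolding admissible_dynamics_def by blast
      qed
      obtain c where c: "c > 0" "\<forall>p\<in>slab (1 - r) (1 - \<delta>3). c \<le> V p \<bullet> F p"
      proof -
        have "compact (slab (1 - r) (1 - \<delta>3))" unfolding slab_def by (rule compact_slab)
        moreover have "continuous_on (slab (1 - r) (1 - \<delta>3)) (\<lambda>p. V p \<bullet> F p)"
          by (rule continuous_on_subset[OF VFc]) (auto simp: slab_def)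
        ultimately show ?thesis using compact_min_pos[of "slab (1 - r) (1 - \<delta>3)" "\<lambda>p. V p \<bullet> F p"] pos that
          by blast
      qed
      define T where "T = (a - Phi (x 0) + 1) / c"
      have "Phi (x 0) \<le> a" using Phi_le[OF xS[of 0]] a_def by simp
      then have T0: "T \<ge> 0" using c by (simp add: T_def)
      have "Phi (x T) - Phi (x 0) \<ge> c * (T - 0)"
        by (rule Phi_growth[OF sol]) (use T0 c in3 in auto)
      moreover have "c * T = a - Phi (x 0) + 1" using c by (simp add: T_def)
      moreover have "Phi (x T) \<le> a" using Phi_le[OF xS[OF T0]] a_def by simp
      ultimately show False by simp
    qed
    show ?thesis
      unfolding tendsto_iff
    proof (intro allI impI)
      fix e :: real assume e: "e > 0"
      define \<delta> where "\<delta> = min (e/3) (r/2)"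
      have "0 < \<delta>" "\<delta> \<le> r/2" using e r by (auto simp: \<delta>_def)
      then obtain T where T: "\<forall>t\<ge>T. 1 - \<delta> < x t $ k" using ev[of \<delta>] by blast
      show "\<forall>\<^sub>F t in at_top. dist (x t) (vert k) < e"
        unfolding eventually_at_top_linorder
      proof (intro exI allI impI)
        fix t assume "t \<ge> max T 0"
        then have "dist (x t) (vert k) \<le> 2 * (1 - x t $ k)" "1 - \<delta> < x t $ k"
          using dist_vert[OF xS[of t]] T by auto
        moreover have "\<delta> \<le> e/3" by (simp add: \<delta>_def)
        ultimately show "dist (x t) (vert k) < e" using e by argo
      qed
    qed
  qed
  show ?thesis
    unfolding stable_eq_def using vert_nash \<open>\<epsilon> > 0\<close> conv by blast
qed

end

end

lemma shift_simplex:
  assumes p: "p \<in> pop_simplex" and u: "0 \<le> u" "u \<le> p $ b"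
  shows "p + u *\<^sub>R (vert a - vert b) \<in> pop_simplex"
proof -
  have "0 \<le> (p + u *\<^sub>R (vert a - vert b)) $ l" for l
    using simplex_nonneg[OF p, of l] u by (auto simp: vert_nth)
  moreover have "(\<Sum>l\<in>UNIV. (p + u *\<^sub>R (vert a - vert b)) $ l) =
      (\<Sum>l\<in>UNIV. p $ l) + u * ((\<Sum>l\<in>UNIV. vert a $ l) - (\<Sum>l\<in>UNIV. vert b $ l))"
    by (simp add: sum.distrib sum_subtractf sum_distrib_left algebra_simps)
  then have "(\<Sum>l\<in>UNIV. (p + u *\<^sub>R (vert a - vert b)) $ l) = 1"
    using simplex_sum[OF p] simplex_sum[OF vert_simplex[of a]] simplex_sum[OF vert_simplex[of b]] by simp
  ultimately show ?thesis by (simp add: pop_simplex_def)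
qed

lemma shift_inner: "(p + u *\<^sub>R (vert a - vert b)) \<bullet> G = p \<bullet> G + u * (G $ a - G $ b)"
  by (simp add: inner_add_left inner_diff_left inner_vert)

lemma norm_vert: "norm (vert k) \<le> 1"
proof -
  have "norm (vert k) \<le> (\<Sum>j\<in>UNIV. \<bar>vert k $ j\<bar>)" by (rule norm_le_l1_cart)
  also have "\<dots> = 1" using simplex_sum[OF vert_simplex[of k]] simplex_nonneg[OF vert_simplex[of k]] by simp
  finally show ?thesis .
qed

lemma shift_dist: assumes "0 \<le> u" shows "dist (p + u *\<^sub>R (vert a - vert b)) p \<le> 2 * u"
proof -
  have "dist (p + u *\<^sub>R (vert a - vert b)) p = u * norm (vert a - vert b)"
    using assms by (simp add: dist_norm)
  also have "\<dots> \<le> u * 2"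
  proof (rule mult_left_mono[OF _ assms])
    have "norm (vert a - vert b) \<le> norm (vert a) + norm (vert b)" by (rule norm_triangle_ineq4)
    then show "norm (vert a - vert b) \<le> 2" using norm_vert[of a] norm_vert[of b] by simp
  qed
  finally show ?thesis by simp
qed

lemma card2_obtain:
  assumes "2 \<le> card (A :: 'a::finite set)"
  obtains i j where "i \<in> A" "j \<in> A" "i \<noteq> j"
proof -
  have "\<not> card A \<le> Suc 0" using assms by simp
  then show ?thesis using card_le_Suc0_iff_eq[of A] that by auto
qed

lemma err_acc:
  assumes "prob_space M" "{z \<in> space M. h (fst z) = snd z} \<in> sets M"
  shows "err M h = 1 - acc M h"
proof -
  have "{z \<in> space M. h (fst z) \<noteq> snd z} = space M - {z \<in> space M. h (fst z) = snd z}" by auto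
  then show ?thesis unfolding err_def acc_def using prob_space.prob_compl[OF assms] by simp
qed

lemma mix_acc_inner: "mix_acc D p h = p \<bullet> (\<chi> k. acc (D k) h)"
  by (simp add: mix_acc_def inner_vec_def)

lemma mix_acc_fitness: "mix_acc D p (sel p') = p \<bullet> fitness D sel p'"
  by (simp add: mix_acc_inner fitness_def)

lemma mix_err_acc:
  assumes g: "oracle_game D H sel" and p: "p \<in> pop_simplex" and h: "h \<in> H"
  shows "mix_err D p h = 1 - mix_acc D p h"
proof -
  have e: "err (D k) h = 1 - acc (D k) h" for k
    using g h unfolding oracle_game_def by (intro err_acc) auto
  have "mix_err D p h = (\<Sum>k\<in>UNIV. p $ k) - (\<Sum>k\<in>UNIV. p $ k * acc (D k) h)"
    unfolding mix_err_def e by (simp add: right_diff_distrib sum_subtractf)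
  then show ?thesis using simplex_sum[OF p] by (simp add: mix_acc_def)
qed

lemma mix_err_vert: "mix_err D (vert i) h = err (D i) h"
proof -
  have "mix_err D (vert i) h = (\<Sum>k\<in>UNIV. if k = i then err (D k) h else 0)"
    unfolding mix_err_def by (rule sum.cong) (auto simp: vert_nth)
  then show ?thesis by simp
qed

lemma game_agame:
  assumes g: "oracle_game D H sel" and dyn: "admissible_dynamics (fitness D sel) V"
  shows "agame (fitness D sel) V"
proof
  have os: "\<forall>p\<in>pop_simplex. sel p \<in> H \<and> (\<forall>h\<in>H. mix_err D p (sel p) \<le> mix_err D p h)"
    using g unfolding oracle_game_def oracle_selection_def by blast
  show "continuous_on pop_simplex (fitness D sel)" using g unfolding oracle_game_def by blast
  show "admissible_dynamics (fitness D sel) V" by (rule dyn)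
  show "p \<bullet> fitness D sel p' \<le> p \<bullet> fitness D sel p" if "p \<in> pop_simplex" "p' \<in> pop_simplex" for p p'
  proof -
    have "mix_err D p (sel p) \<le> mix_err D p (sel p')" using os that by blast
    then have "mix_acc D p (sel p') \<le> mix_acc D p (sel p)"
      using mix_err_acc[OF g that(1)] os that by simp
    then show ?thesis by (simp add: mix_acc_fitness)
  qed
  show "fitness D sel p $ i < fitness D sel (vert i) $ i \<or> fitness D sel p $ j < fitness D sel (vert j) $ j"
    if p: "p \<in> pop_simplex" and ij: "i \<noteq> j" for p i j
  proof (rule ccontr)
    assume "\<not> ?thesis"
    then have ge: "fitness D sel (vert i) $ i \<le> fitness D sel p $ i" "fitness D sel (vert j) $ j \<le> fitness D sel p $ j"
      by auto
    have orc: "sel p \<in> oracle_set H (D l)" if "fitness D sel (vert l) $ l \<le> fitness D sel p $ l" for l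
    proof -
      have selH: "sel p \<in> H" "sel (vert l) \<in> H" using os p vert_simplex by blast+
      have e: "err (D l) h = 1 - acc (D l) h" if "h \<in> H" for h
        using g that unfolding oracle_game_def by (intro err_acc) auto
      have "\<forall>h'\<in>H. err (D l) (sel p) \<le> err (D l) h'"
      proof
        fix h' assume h': "h' \<in> H"
        have "err (D l) (sel p) \<le> err (D l) (sel (vert l))"
          using e selH that by (simp add: fitness_def)
        also have "\<dots> \<le> err (D l) h'"
          using os vert_simplex[of l] h' mix_err_vert[of D l] by metis
        finally show "err (D l) (sel p) \<le> err (D l) h'" .
      qed
      then show ?thesis using selH unfolding oracle_set_def by blast
    qed
    have "no_shared_oracle D H" using g unfolding oracle_game_def by blast
    then show False using orc[OF ge(1)] orc[OF ge(2)] ij unfolding no_shared_oracle_def by blast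
  qed
qed

context agame begin

lemma nash_rest:
  assumes p: "p \<in> pop_simplex" and ne: "nash_eq F p"
  shows "V p = 0"
proof -
  have "nash_stationary F V \<or> imitative F V" using adm unfolding admissible_dynamics_def by blast
  then show ?thesis
  proof
    assume "nash_stationary F V" then show ?thesis using p ne unfolding nash_stationary_def by blast
  next
    assume "imitative F V"
    then obtain G where G: "\<forall>p\<in>pop_simplex. \<forall>k. V p $ k = p $ k * G p $ k"
      "\<forall>p\<in>pop_simplex. \<forall>i j. G p $ i \<le> G p $ j \<longleftrightarrow> F p $ i \<le> F p $ j"
      unfolding imitative_def by blast
    obtain i0 where i0: "0 < p $ i0"
    proof (rule ccontr)
      assume nt: "\<not> thesis"
      note th = that
      have "\<And>l. p $ l \<le> 0" using th nt by (meson not_le)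
      then have "(\<Sum>l\<in>UNIV. p $ l) \<le> 0" by (simp add: sum_nonpos)
      then show False using simplex_sum[OF p] by simp
    qed
    have Geq: "G p $ l = G p $ i0" if "0 < p $ l" for l
    proof -
      have "F p $ l \<le> F p $ i0" "F p $ i0 \<le> F p $ l"
        using ne i0 that unfolding nash_eq_def pop_supp_def by auto
      then show ?thesis using G(2) p by (meson order_antisym)
    qed
    have trm: "p $ l * G p $ l = p $ l * G p $ i0" for l
      using Geq[of l] simplex_nonneg[OF p, of l] by (cases "p $ l = 0") auto
    have "0 = (\<Sum>l\<in>UNIV. V p $ l)" using adm p unfolding admissible_dynamics_def by auto
    also have "\<dots> = (\<Sum>l\<in>UNIV. p $ l * G p $ l)" using G(1) p by simp
    also have "\<dots> = (\<Sum>l\<in>UNIV. p $ l * G p $ i0)" by (rule sum.cong[OF refl trm])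
    also have "\<dots> = G p $ i0" using simplex_sum[OF p] by (simp add: sum_distrib_right[symmetric])
    finally have "G p $ i0 = 0" by simp
    then show ?thesis using G(1) p trm by (simp add: vec_eq_iff)
  qed
qed

lemma coex_unstable:
  assumes q: "nash_eq F q" "2 \<le> card (pop_supp q)"
  shows "\<not> stable_eq F V q"
proof
  assume "stable_eq F V q"
  then obtain \<epsilon> where \<epsilon>: "\<epsilon> > 0" "\<And>x. dyn_solution V x \<Longrightarrow> dist (x 0) q < \<epsilon> \<Longrightarrow> (x \<longlongrightarrow> q) at_top"
    unfolding stable_eq_def by blast
  have qS: "q \<in> pop_simplex" using q unfolding nash_eq_def by blast
  obtain i j where ij: "i \<in> pop_supp q" "j \<in> pop_supp q" "i \<noteq> j" using card2_obtain[OF q(2)] by blast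
  have Fij: "F q $ i = F q $ j" using q(1) ij unfolding nash_eq_def by (meson order_antisym)
  show False
  proof (cases "\<exists>p\<in>pop_simplex. dist p q < \<epsilon> \<and> Phi q < Phi p")
    case True
    then obtain p where p: "p \<in> pop_simplex" "dist p q < \<epsilon>" "Phi q < Phi p" by blast
    obtain x where x: "dyn_solution V x" "x 0 = p" using adm p(1) unfolding admissible_dynamics_def by blast
    have lim: "(x \<longlongrightarrow> q) at_top" using \<epsilon>(2)[OF x(1)] x(2) p(2) by simp
    have evS: "\<forall>\<^sub>F t in at_top. x t \<in> pop_simplex"
      unfolding eventually_at_top_linorder using sol_in[OF x(1)] by blast
    have "((\<lambda>t. Phi (x t)) \<longlongrightarrow> Phi q) at_top"
      by (rule continuous_on_tendsto_compose[OF Phi_cont lim qS evS])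
    moreover have "\<forall>\<^sub>F t in at_top. Phi p \<le> Phi (x t)"
      unfolding eventually_at_top_linorder using Phi_mono[OF x(1)] x(2)
      by (intro exI[of _ 0]) (auto simp: mono_on_def)
    ultimately have "Phi p \<le> Phi q" by (rule tendsto_lowerbound) simp
    then show False using p(3) by simp
  next
    case False
    then have loc: "\<And>p. p \<in> pop_simplex \<Longrightarrow> dist p q < \<epsilon> \<Longrightarrow> Phi p \<le> Phi q" by force
    define s where "s = min (\<epsilon>/4) (q $ j / 2)"
    have qj: "0 < q $ j" using ij unfolding pop_supp_def by simp
    have s: "0 < s" "s \<le> q $ j" "s \<le> \<epsilon>/4" using \<epsilon>(1) qj by (auto simp: s_def)
    define p where "p = q + s *\<^sub>R (vert i - vert j)"
    have pS: "p \<in> pop_simplex" unfolding p_def by (rule shift_simplex[OF qS]) (use s in auto)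
    have pq: "dist p q \<le> \<epsilon>/2" using shift_dist[of s q i j] s unfolding p_def by simp
    have pneq: "p \<noteq> q"
    proof
      assume "p = q"
      then have "p $ i = q $ i" by simp
      then show False using s ij(3) by (simp add: p_def vert_nth)
    qed
    have "Phi q = p \<bullet> F q" unfolding p_def shift_inner Phi_def using Fij by simp
    also have "\<dots> \<le> Phi p" unfolding Phi_def by (rule star[OF pS qS])
    finally have PhiPQ: "Phi q \<le> Phi p" .
    have pnash: "nash_eq F p"
      unfolding nash_eq_def
    proof (intro conjI ballI allI pS)
      fix m l assume m: "m \<in> pop_supp p"
      then have pm: "0 < p $ m" by (simp add: pop_supp_def)
      define u where "u = min (p $ m) (\<epsilon>/8)"
      have u: "0 < u" "u \<le> p $ m" "u \<le> \<epsilon>/8" using pm \<epsilon>(1) by (auto simp: u_def)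
      define p' where "p' = p + u *\<^sub>R (vert l - vert m)"
      have p'S: "p' \<in> pop_simplex" unfolding p'_def by (rule shift_simplex[OF pS]) (use u in auto)
      have "dist p' p \<le> 2 * u" unfolding p'_def by (rule shift_dist) (use u in auto)
      then have "dist p' q < \<epsilon>" using dist_triangle[of p' q p] pq u \<epsilon>(1) by linarith
      then have "Phi p' \<le> Phi q" using loc p'S by blast
      moreover have "p' \<bullet> F p \<le> Phi p'" unfolding Phi_def by (rule star[OF p'S pS])
      moreover have "p' \<bullet> F p = Phi p + u * (F p $ l - F p $ m)" unfolding p'_def shift_inner Phi_def ..
      ultimately have "u * (F p $ l - F p $ m) \<le> 0" using PhiPQ by linarith
      then show "F p $ l \<le> F p $ m" using u(1) by (simp add: mult_le_0_iff)
    qed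
    have V0: "V p = 0" by (rule nash_rest[OF pS pnash])
    have xsol: "dyn_solution V (\<lambda>t. p)"
      unfolding dyn_solution_def using pS V0 by (auto intro: has_vector_derivative_const)
    have "dist p q < \<epsilon>" using pq \<epsilon>(1) by simp
    then have "((\<lambda>t::real. p) \<longlongrightarrow> q) at_top" using \<epsilon>(2)[OF xsol] by simp
    then have "p = q" using tendsto_unique[OF _ tendsto_const] by (metis trivial_limit_at_top_linorder)
    then show False using pneq by simp
  qed
qed

end


lemma exists_max_vertex:
  fixes f :: "'k::finite \<Rightarrow> real"
  shows "\<exists>k. \<forall>j. f j \<le> f k"
proof -
  have "Max (range f) \<in> range f" by (rule Max_in) auto
  then obtain k where "f k = Max (range f)" by (metis rangeE)
  moreover have "f j \<le> Max (range f)" for j by (rule Max_ge) auto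
  ultimately show ?thesis by metis
qed

lemma supp_nonempty: assumes "p \<in> pop_simplex" shows "pop_supp p \<noteq> {}"
proof
  assume "pop_supp p = {}"
  then have "\<And>l. p $ l \<le> 0" by (auto simp: pop_supp_def not_less[symmetric])
  then have "(\<Sum>l\<in>UNIV. p $ l) \<le> 0" by (simp add: sum_nonpos)
  then show False using simplex_sum[OF assms] by simp
qed

lemma main_general:
  fixes D :: "'k::finite \<Rightarrow> ('x \<times> 'y) measure"
  assumes game: "oracle_game D H sel"
    and dyn: "admissible_dynamics (fitness D sel) V"
  shows "(\<forall>x. dyn_solution V x \<longrightarrow> mono_on {0..} (\<lambda>t. mix_acc D (x t) (sel (x t))))
     \<and> (\<exists>q. stable_eq (fitness D sel) V q)
     \<and> (\<forall>q. stable_eq (fitness D sel) V q \<longrightarrow> card (pop_supp q) = 1)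
     \<and> (\<forall>q. nash_eq (fitness D sel) q \<and> card (pop_supp q) \<ge> 2 \<longrightarrow> \<not> stable_eq (fitness D sel) V q)"
proof -
  interpret agame "fitness D sel" V by (rule game_agame[OF game dyn])
  have P1: "mono_on {0..} (\<lambda>t. mix_acc D (x t) (sel (x t)))" if "dyn_solution V x" for x
    using Phi_mono[OF that] by (simp add: mix_acc_fitness Phi_def)
  obtain k where k: "\<And>j. fitness D sel (vert j) $ j \<le> fitness D sel (vert k) $ k"
    using exists_max_vertex[of "\<lambda>j. fitness D sel (vert j) $ j"] by blast
  have P2: "stable_eq (fitness D sel) V (vert k)" by (rule vert_stable[OF k])
  have P4: "\<not> stable_eq (fitness D sel) V q" if "nash_eq (fitness D sel) q" "card (pop_supp q) \<ge> 2" for q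
    by (rule coex_unstable[OF that])
  have P3: "card (pop_supp q) = 1" if st: "stable_eq (fitness D sel) V q" for q
  proof -
    have ne: "nash_eq (fitness D sel) q" using st unfolding stable_eq_def by blast
    then have "q \<in> pop_simplex" unfolding nash_eq_def by blast
    then have "card (pop_supp q) \<noteq> 0" using supp_nonempty by (simp add: card_eq_0_iff)
    moreover have "\<not> card (pop_supp q) \<ge> 2" using P4[OF ne] st by blast
    ultimately show ?thesis by arith
  qed
  show ?thesis using P1 P2 P3 P4 by blast
qed




definition U :: "real measure" where "U = uniform_measure lborel {0..1}"

definition Dex :: "bool \<Rightarrow> (real \<times> bool) measure" where
  "Dex b = distr U (borel \<Otimes>\<^sub>M count_space UNIV) (\<lambda>x. (if b then x else x + 2, b))"

definition hyp :: "real \<Rightarrow> real \<Rightarrow> real \<Rightarrow> bool" where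
  "hyp a c y = (if y < 2 then y \<le> a else \<not> (y - 2 \<le> c))"

lemma U_prob: "prob_space U"
  unfolding U_def by (rule prob_space_uniform_measure) auto

lemma sets_U[simp]: "sets U = sets borel" by (simp add: U_def)
lemma space_U[simp]: "space U = UNIV" by (simp add: U_def)

lemma map_meas: "(\<lambda>x. (if b then x else x + 2, b)) \<in> U \<rightarrow>\<^sub>M (borel \<Otimes>\<^sub>M count_space UNIV)"
  by (subst measurable_cong_sets[OF sets_U refl]) measurable

lemma hyp_pred: "{z \<in> space (borel \<Otimes>\<^sub>M count_space UNIV). h (fst z) = snd z} \<in> sets (borel \<Otimes>\<^sub>M count_space (UNIV::bool set))"
  if "h = hyp a c" for h
  unfolding that hyp_def by measurable


lemma space_Dex[simp]: "space (Dex b) = UNIV"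
  by (simp add: Dex_def space_pair_measure)

lemma sets_Dex[simp]: "sets (Dex b) = sets (borel \<Otimes>\<^sub>M count_space UNIV)"
  by (simp add: Dex_def)

lemma Dex_prob: "prob_space (Dex b)"
  unfolding Dex_def by (rule prob_space.prob_space_distr[OF U_prob map_meas])

lemma meas_Dex:
  assumes A: "A \<in> sets (borel \<Otimes>\<^sub>M count_space UNIV)"
  shows "measure (Dex b) A = measure lborel ({0..1} \<inter> {x. (if b then x else x + 2, b) \<in> A})"
proof -
  have "measure (Dex b) A = measure U ((\<lambda>x. (if b then x else x + 2, b)) -` A \<inter> space U)"
    unfolding Dex_def by (rule measure_distr[OF map_meas A])
  also have "(\<lambda>x. (if b then x else x + 2, b)) -` A \<inter> space U = {x. (if b then x else x + 2, b) \<in> A}"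
    by auto
  also have "measure U \<dots> = measure lborel ({0..1} \<inter> {x. (if b then x else x + 2, b) \<in> A}) / measure lborel {0..1::real}"
    unfolding U_def
  proof (rule measure_uniform_measure)
    have "(\<lambda>x. (if b then x else x + 2, b)) -` A \<inter> space U \<in> sets U"
      by (rule measurable_sets[OF map_meas A])
    then show "{x. (if b then x else x + 2, b) \<in> A} \<in> sets lborel" by (simp add: vimage_def)
  qed auto
  finally show ?thesis by simp
qed

lemma hyp_sets0: "{z \<in> space (borel \<Otimes>\<^sub>M count_space UNIV). hyp a c (fst z) = snd z} \<in> sets (borel \<Otimes>\<^sub>M count_space (UNIV::bool set))"
  "{z \<in> space (borel \<Otimes>\<^sub>M count_space UNIV). hyp a c (fst z) \<noteq> snd z} \<in> sets (borel \<Otimes>\<^sub>M count_space (UNIV::bool set))"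
  unfolding hyp_def by measurable

lemma hyp_sets': "{z \<in> UNIV. hyp a c (fst z) = snd z} \<in> sets (borel \<Otimes>\<^sub>M count_space UNIV)"
  "{z \<in> UNIV. hyp a c (fst z) \<noteq> snd z} \<in> sets (borel \<Otimes>\<^sub>M count_space UNIV)"
  using hyp_sets0[of a c] by (simp_all add: space_pair_measure)

lemma hyp_sets: "{z \<in> space (Dex b). hyp a c (fst z) = snd z} \<in> sets (Dex b)"
  "{z \<in> space (Dex b). hyp a c (fst z) \<noteq> snd z} \<in> sets (Dex b)"
  using hyp_sets' by simp_all

lemma acc_T: assumes "0 \<le> a" "a \<le> 1" shows "acc (Dex True) (hyp a c) = a"
proof -
  have "acc (Dex True) (hyp a c) = measure lborel ({0..1} \<inter> {x. hyp a c x})"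
    unfolding acc_def using meas_Dex[OF hyp_sets'(1), of True a c] by simp
  also have "{0..1} \<inter> {x. hyp a c x} = {0..a}" using assms by (auto simp: hyp_def)
  finally show ?thesis using assms by simp
qed

lemma acc_F: assumes "0 \<le> c" "c \<le> 1" shows "acc (Dex False) (hyp a c) = c"
proof -
  have "acc (Dex False) (hyp a c) = measure lborel ({0..1} \<inter> {x. \<not> hyp a c (x + 2)})"
    unfolding acc_def using meas_Dex[OF hyp_sets'(1), of False a c] by simp
  also have "{0..1} \<inter> {x. \<not> hyp a c (x + 2)} = {0..c}" using assms by (auto simp: hyp_def)
  finally show ?thesis using assms by simp
qed

lemma err_T: assumes "0 \<le> a" "a \<le> 1" shows "err (Dex True) (hyp a c) = 1 - a"
proof -
  have "err (Dex True) (hyp a c) = measure lborel ({0..1} \<inter> {x. \<not> hyp a c x})"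
    unfolding err_def using meas_Dex[OF hyp_sets'(2), of True a c] by simp
  also have "{0..1} \<inter> {x. \<not> hyp a c x} = {a<..1}" using assms by (auto simp: hyp_def)
  finally show ?thesis using assms by simp
qed

lemma err_F: assumes "0 \<le> c" "c \<le> 1" shows "err (Dex False) (hyp a c) = 1 - c"
proof -
  have "err (Dex False) (hyp a c) = measure lborel ({0..1} \<inter> {x. hyp a c (x + 2)})"
    unfolding err_def using meas_Dex[OF hyp_sets'(2), of False a c] by simp
  also have "{0..1} \<inter> {x. hyp a c (x + 2)} = {c<..1}" using assms by (auto simp: hyp_def)
  finally show ?thesis using assms by simp
qed


lemma sum_bool: "(\<Sum>b\<in>(UNIV::bool set). f b) = f True + f False"
  by (simp add: UNIV_bool add.commute)

lemma simplex_bool: "p \<in> pop_simplex \<longleftrightarrow> 0 \<le> p $ True \<and> 0 \<le> p $ False \<and> p $ True + p $ False = 1"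
  by (auto simp: pop_simplex_def sum_bool all_bool_eq)

definition Nrm :: "real ^ bool \<Rightarrow> real" where "Nrm p = sqrt ((p $ True)\<^sup>2 + (p $ False)\<^sup>2)"

definition Hex :: "(real \<Rightarrow> bool) set" where
  "Hex = {hyp a c | a c. 0 \<le> a \<and> 0 \<le> c \<and> a\<^sup>2 + c\<^sup>2 = 1}"

definition selex :: "real ^ bool \<Rightarrow> (real \<Rightarrow> bool)" where
  "selex p = hyp (p $ True / Nrm p) (p $ False / Nrm p)"

definition Gex :: "real ^ bool \<Rightarrow> real ^ bool" where
  "Gex p = (\<chi> b. if b then p $ True / Nrm p else p $ False / Nrm p)"

lemma Nrm_pos: assumes "p \<in> pop_simplex" shows "Nrm p > 0"
proof -
  have "p $ True \<noteq> 0 \<or> p $ False \<noteq> 0" using assms by (auto simp: simplex_bool)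
  then have "(p $ True)\<^sup>2 + (p $ False)\<^sup>2 > 0" by (auto simp: add_pos_nonneg add_nonneg_pos)
  then show ?thesis by (simp add: Nrm_def)
qed

lemma Nrm_sq: "(Nrm p)\<^sup>2 = (p $ True)\<^sup>2 + (p $ False)\<^sup>2"
  by (simp add: Nrm_def)

lemma unit_le1: fixes a c :: real assumes "0 \<le> a" "0 \<le> c" "a\<^sup>2 + c\<^sup>2 = 1" shows "a \<le> 1" "c \<le> 1"
proof -
  have "a\<^sup>2 \<le> 1" using assms(3) zero_le_power2[of c] by linarith
  moreover have "c\<^sup>2 \<le> 1" using assms(3) zero_le_power2[of a] by linarith
  ultimately show "a \<le> 1" "c \<le> 1" using assms(1,2) by (auto simp: power_le_one_iff abs_square_le_1)
qed

lemma params: assumes p: "p \<in> pop_simplex"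
  shows "0 \<le> p $ True / Nrm p" "0 \<le> p $ False / Nrm p"
    "(p $ True / Nrm p)\<^sup>2 + (p $ False / Nrm p)\<^sup>2 = 1"
proof -
  have N: "Nrm p > 0" by (rule Nrm_pos[OF p])
  have "0 \<le> p $ True" "0 \<le> p $ False" using p by (simp_all add: simplex_bool)
  then show "0 \<le> p $ True / Nrm p" "0 \<le> p $ False / Nrm p" using N by simp_all
  show "(p $ True / Nrm p)\<^sup>2 + (p $ False / Nrm p)\<^sup>2 = 1"
  proof -
    have "(p $ True / Nrm p)\<^sup>2 + (p $ False / Nrm p)\<^sup>2 = ((p $ True)\<^sup>2 + (p $ False)\<^sup>2) / (Nrm p)\<^sup>2"
      by (simp add: power_divide add_divide_distrib)
    also have "\<dots> = 1" using N unfolding Nrm_sq[symmetric] by simp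
    finally show ?thesis .
  qed
qed

lemma selex_H: "p \<in> pop_simplex \<Longrightarrow> selex p \<in> Hex"
  using params unfolding Hex_def selex_def by blast

lemma Hex_cases: assumes "h \<in> Hex"
  obtains a c where "h = hyp a c" "0 \<le> a" "0 \<le> c" "a \<le> 1" "c \<le> 1" "a\<^sup>2 + c\<^sup>2 = 1"
  using assms unit_le1 unfolding Hex_def by blast

lemma fit_ex: assumes p: "p \<in> pop_simplex" shows "fitness Dex selex p = Gex p"
proof -
  have pa: "0 \<le> p $ True / Nrm p" "0 \<le> p $ False / Nrm p" "p $ True / Nrm p \<le> 1" "p $ False / Nrm p \<le> 1"
    using params[OF p] unit_le1[OF params[OF p]] by auto
  show ?thesis unfolding fitness_def Gex_def selex_def vec_eq_iff
  proof
    fix b :: bool show "(\<chi> k. acc (Dex k) (hyp (p $ True / Nrm p) (p $ False / Nrm p))) $ b =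
      (\<chi> b. if b then p $ True / Nrm p else p $ False / Nrm p) $ b"
      using acc_T[OF pa(1,3)] acc_F[OF pa(2,4)] by (cases b) auto
  qed
qed

lemma cs2: assumes "a\<^sup>2 + c\<^sup>2 = 1" shows "x * a + y * c \<le> sqrt (x\<^sup>2 + y\<^sup>2)"
proof (rule real_le_rsqrt)
  have "(x * a + y * c)\<^sup>2 + (x * c - y * a)\<^sup>2 = (x\<^sup>2 + y\<^sup>2) * (a\<^sup>2 + c\<^sup>2)"
    by (simp add: power2_eq_square algebra_simps)
  then have "(x * a + y * c)\<^sup>2 + (x * c - y * a)\<^sup>2 = x\<^sup>2 + y\<^sup>2" using assms by simp
  then show "(x * a + y * c)\<^sup>2 \<le> x\<^sup>2 + y\<^sup>2" using zero_le_power2[of "x * c - y * a"] by linarith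
qed

lemma mix_err_ex: assumes "0 \<le> a" "0 \<le> c" "a \<le> 1" "c \<le> 1"
  shows "mix_err Dex p (hyp a c) = p $ True * (1 - a) + p $ False * (1 - c)"
  using assms by (simp add: mix_err_def sum_bool err_T err_F)

lemma game_ex: "oracle_game Dex Hex selex"
  unfolding oracle_game_def
proof (intro conjI allI ballI)
  show "prob_space (Dex k)" for k by (rule Dex_prob)
  show "{z \<in> space (Dex k). h (fst z) = snd z} \<in> sets (Dex k)" if "h \<in> Hex" for k h
    using that hyp_sets(1) by (auto elim: Hex_cases)
  have h10: "hyp 1 0 \<in> Hex" "hyp 0 1 \<in> Hex" unfolding Hex_def by force+
  show "no_shared_oracle Dex Hex"
    unfolding no_shared_oracle_def
  proof (intro allI impI notI)
    fix k k' :: bool assume kk: "k \<noteq> k'"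
      and "\<exists>h. h \<in> oracle_set Hex (Dex k) \<and> h \<in> oracle_set Hex (Dex k')"
    then obtain h where h: "h \<in> oracle_set Hex (Dex True)" "h \<in> oracle_set Hex (Dex False)"
      by (cases k; cases k') auto
    then have hH: "h \<in> Hex" unfolding oracle_set_def by blast
    then obtain a c where ac: "h = hyp a c" "0 \<le> a" "0 \<le> c" "a \<le> 1" "c \<le> 1" "a\<^sup>2 + c\<^sup>2 = 1"
      by (rule Hex_cases)
    have "err (Dex True) h \<le> err (Dex True) (hyp 1 0)" using h(1) h10 unfolding oracle_set_def by blast
    then have "a \<ge> 1" using ac err_T[of a c] err_T[of 1 0] by simp
    moreover have "err (Dex False) h \<le> err (Dex False) (hyp 0 1)" using h(2) h10 unfolding oracle_set_def by blast
    then have "c \<ge> 1" using ac err_F[of c a] err_F[of 1 0] by simp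
    ultimately show False using ac by (smt (verit) one_le_power)
  qed
  show "oracle_selection Dex Hex selex"
    unfolding oracle_selection_def
  proof (intro ballI conjI)
    fix p :: "real ^ bool" assume p: "p \<in> pop_simplex"
    show sH: "selex p \<in> Hex" by (rule selex_H[OF p])
    fix h assume "h \<in> Hex"
    then obtain a c where ac: "h = hyp a c" "0 \<le> a" "0 \<le> c" "a \<le> 1" "c \<le> 1" "a\<^sup>2 + c\<^sup>2 = 1"
      by (rule Hex_cases)
    have N: "Nrm p > 0" by (rule Nrm_pos[OF p])
    have pa: "0 \<le> p $ True / Nrm p" "0 \<le> p $ False / Nrm p" "p $ True / Nrm p \<le> 1" "p $ False / Nrm p \<le> 1"
      using params[OF p] unit_le1[OF params[OF p]] by auto
    have "p $ True * a + p $ False * c \<le> Nrm p" unfolding Nrm_def by (rule cs2[OF ac(6)])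
    also have "Nrm p = p $ True * (p $ True / Nrm p) + p $ False * (p $ False / Nrm p)"
      using N Nrm_sq[of p] by (simp add: power2_eq_square field_simps)
    finally show "mix_err Dex p (selex p) \<le> mix_err Dex p h"
      unfolding selex_def ac(1) mix_err_ex[OF pa] mix_err_ex[OF ac(2-5)] by (simp add: algebra_simps)
  qed
  show "continuous_on pop_simplex (fitness Dex selex)"
  proof (rule continuous_on_cong[THEN iffD2, OF refl])
    show "\<And>p. p \<in> pop_simplex \<Longrightarrow> fitness Dex selex p = Gex p" by (rule fit_ex)
    have "continuous_on pop_simplex (\<lambda>p. (\<chi> b. if b then p $ True / Nrm p else p $ False / Nrm p))"
    proof (intro continuous_on_vec_lambda)
      fix b :: bool
      have "continuous_on pop_simplex Nrm" unfolding Nrm_def by (intro continuous_intros)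
      then show "continuous_on pop_simplex (\<lambda>p. if b then p $ True / Nrm p else p $ False / Nrm p)"
        using Nrm_pos by (cases b) (auto intro!: continuous_intros simp: less_imp_neq[symmetric])
    qed
    then show "continuous_on pop_simplex Gex" unfolding Gex_def .
  qed
qed


definition fz :: "real \<Rightarrow> real" where "fz z = z * (1 - \<bar>z\<bar>)"

definition Vex :: "real ^ bool \<Rightarrow> real ^ bool" where
  "Vex p = (\<chi> b. (if b then 1 else -1) * fz (p $ True - p $ False) / 2)"

lemma Vex_zero: "Vex p = 0 \<longleftrightarrow> fz (p $ True - p $ False) = 0"
proof
  assume "Vex p = 0"
  then have "Vex p $ True = 0" by simp
  then show "fz (p $ True - p $ False) = 0" by (simp add: Vex_def)
next
  assume "fz (p $ True - p $ False) = 0"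
  then show "Vex p = 0" by (simp add: Vex_def vec_eq_iff)
qed

lemma VG: assumes p: "p \<in> pop_simplex"
  shows "Vex p \<bullet> Gex p = fz (p $ True - p $ False) * (p $ True - p $ False) / (2 * Nrm p)"
  using Nrm_pos[OF p] by (simp add: Vex_def Gex_def inner_vec_def sum_bool field_simps)

lemma nash_ex_iff:
  assumes p: "p \<in> pop_simplex"
  shows "nash_eq (fitness Dex selex) p \<longleftrightarrow> (0 < p $ True \<longrightarrow> p $ False \<le> p $ True) \<and> (0 < p $ False \<longrightarrow> p $ True \<le> p $ False)"
proof -
  have N: "Nrm p > 0" by (rule Nrm_pos[OF p])
  have "nash_eq (fitness Dex selex) p \<longleftrightarrow> (\<forall>k. 0 < p $ k \<longrightarrow> (\<forall>j. Gex p $ j \<le> Gex p $ k))"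
    unfolding nash_eq_def pop_supp_def using p fit_ex[OF p] by auto
  also have "\<dots> \<longleftrightarrow> (0 < p $ True \<longrightarrow> p $ False \<le> p $ True) \<and> (0 < p $ False \<longrightarrow> p $ True \<le> p $ False)"
    using N by (simp add: all_bool_eq Gex_def divide_le_cancel)
  finally show ?thesis .
qed

lemma zt_deriv:
  fixes z0 :: real
  assumes z0: "\<bar>z0\<bar> \<le> 1"
  defines "Dn \<equiv> \<lambda>t. 1 - \<bar>z0\<bar> + \<bar>z0\<bar> * exp t"
  defines "zt \<equiv> \<lambda>t. z0 * exp t / Dn t"
  shows "\<And>t. Dn t > 0" "\<And>t. \<bar>zt t\<bar> \<le> 1" "zt 0 = z0"
    "\<And>t. (zt has_real_derivative fz (zt t)) (at t within S)"
proof -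
  show Dpos: "Dn t > 0" for t
  proof (cases "z0 = 0")
    case True then show ?thesis by (simp add: Dn_def)
  next
    case False
    then have "\<bar>z0\<bar> * exp t > 0" by simp
    then show ?thesis using z0 by (simp add: Dn_def)
  qed
  have absz: "\<bar>zt t\<bar> = \<bar>z0\<bar> * exp t / Dn t" for t
    using Dpos[of t] by (simp add: zt_def abs_mult)
  show "\<bar>zt t\<bar> \<le> 1" for t
    unfolding absz using Dpos[of t] z0 by (simp add: Dn_def)
  show "zt 0 = z0" by (simp add: zt_def Dn_def)
  fix t
  have "(zt has_real_derivative (z0 * exp t * Dn t - z0 * exp t * (\<bar>z0\<bar> * exp t)) / (Dn t * Dn t)) (at t within S)"
    unfolding zt_def Dn_def
    by (rule derivative_eq_intros refl | simp add: Dpos[unfolded Dn_def] less_imp_neq[symmetric])+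
  moreover have "(z0 * exp t * Dn t - z0 * exp t * (\<bar>z0\<bar> * exp t)) / (Dn t * Dn t) = fz (zt t)"
    unfolding fz_def absz using Dpos[of t]
    by (simp add: zt_def field_simps)
  ultimately show "(zt has_real_derivative fz (zt t)) (at t within S)" by simp
qed

lemma sol_ex:
  assumes x0: "x0 \<in> pop_simplex"
  shows "\<exists>x. dyn_solution Vex x \<and> x 0 = x0"
proof -
  define z0 where "z0 = x0 $ True - x0 $ False"
  have s0: "0 \<le> x0 $ True" "0 \<le> x0 $ False" "x0 $ True + x0 $ False = 1" using x0 by (auto simp: simplex_bool)
  have z0b: "\<bar>z0\<bar> \<le> 1" using s0 by (auto simp: z0_def)
  define zt where "zt t = z0 * exp t / (1 - \<bar>z0\<bar> + \<bar>z0\<bar> * exp t)" for t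
  have Zb: "\<bar>zt t\<bar> \<le> 1" for t using zt_deriv(2)[OF z0b, of t] by (simp add: zt_def)
  have Z0: "zt 0 = z0" by (simp add: zt_def)
  have Zd: "(zt has_real_derivative fz (zt t)) (at t within {0..})" for t
    using zt_deriv(4)[OF z0b, of t "{0..}"] by (simp add: zt_def[abs_def])
  define c0 :: "real ^ bool" where "c0 = (\<chi> b. 1/2)"
  define w :: "real ^ bool" where "w = (\<chi> b. if b then 1/2 else -1/2)"
  define x where "x t = c0 + zt t *\<^sub>R w" for t
  have xT: "x t $ True = (1 + zt t) / 2" and xF: "x t $ False = (1 - zt t) / 2" for t
    by (simp_all add: x_def c0_def w_def field_simps)
  have xS: "x t \<in> pop_simplex" for t
    using Zb[of t] unfolding simplex_bool xT xF by (auto simp: abs_le_iff field_simps)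
  have "x 0 = x0"
    unfolding vec_eq_iff
  proof
    fix b :: bool show "x 0 $ b = x0 $ b"
      using Z0 s0 by (cases b) (auto simp: xT xF z0_def field_simps)
  qed
  moreover have "(x has_vector_derivative Vex (x t)) (at t within {0..})" for t
  proof -
    have "(x has_vector_derivative (0 + (zt t *\<^sub>R 0 + fz (zt t) *\<^sub>R w))) (at t within {0..})"
      unfolding x_def
      by (intro has_vector_derivative_add has_vector_derivative_const has_vector_derivative_scaleR Zd)
    moreover have "(1 + zt t) / 2 - (1 - zt t) / 2 = zt t" by (simp add: field_simps)
    then have "Vex (x t) = fz (zt t) *\<^sub>R w"
      by (simp add: Vex_def xT xF w_def vec_eq_iff all_bool_eq)
    ultimately show ?thesis by simp
  qed
  ultimately show ?thesis unfolding dyn_solution_def using xS by blast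
qed

lemma arith_nash:
  fixes t u :: real assumes "0 \<le> t" "0 \<le> u" "t + u = 1"
  shows "(t - u) * (1 - \<bar>t - u\<bar>) = 0 \<longleftrightarrow> (0 < t \<longrightarrow> u \<le> t) \<and> (0 < u \<longrightarrow> t \<le> u)"
proof -
  have "(t - u) * (1 - \<bar>t - u\<bar>) = 0 \<longleftrightarrow> t = u \<or> \<bar>t - u\<bar> = 1" by auto
  also have "\<dots> \<longleftrightarrow> t = u \<or> t = 0 \<or> u = 0" using assms by linarith
  also have "\<dots> \<longleftrightarrow> (0 < t \<longrightarrow> u \<le> t) \<and> (0 < u \<longrightarrow> t \<le> u)" using assms by linarith
  finally show ?thesis .
qed

lemma adm_ex: "admissible_dynamics (fitness Dex selex) Vex"
  unfolding admissible_dynamics_def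
proof (intro conjI ballI impI)
  show "continuous_on pop_simplex Vex"
    unfolding Vex_def fz_def by (intro continuous_intros) auto
  show "(\<Sum>k\<in>UNIV. Vex p $ k) = 0" for p by (simp add: sum_bool Vex_def)
  show "0 < Vex p \<bullet> fitness Dex selex p" if p: "p \<in> pop_simplex" and V: "Vex p \<noteq> 0" for p
  proof -
    define z where "z = p $ True - p $ False"
    have N: "Nrm p > 0" by (rule Nrm_pos[OF p])
    have zb: "\<bar>z\<bar> \<le> 1" using p unfolding z_def simplex_bool by auto
    have "fz z \<noteq> 0" using V Vex_zero z_def by simp
    then have "z \<noteq> 0" "\<bar>z\<bar> \<noteq> 1" by (auto simp: fz_def)
    then have "0 < 1 - \<bar>z\<bar>" "0 < z * z" using zb by (auto simp: zero_less_mult_iff linorder_neq_iff)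
    moreover have "fz z * z = (z * z) * (1 - \<bar>z\<bar>)" unfolding fz_def by (simp only: mult.commute mult.left_commute)
    ultimately have "0 < fz z * z" by (metis mult_pos_pos)
    then show ?thesis unfolding fit_ex[OF p] VG[OF p] z_def[symmetric] using N by simp
  qed
  show "nash_stationary (fitness Dex selex) Vex \<or> imitative (fitness Dex selex) Vex"
  proof (rule disjI1)
    show "nash_stationary (fitness Dex selex) Vex"
      unfolding nash_stationary_def
    proof
      fix p :: "real ^ bool" assume p: "p \<in> pop_simplex"
      have s: "0 \<le> p $ True" "0 \<le> p $ False" "p $ True + p $ False = 1" using p by (auto simp: simplex_bool)
      show "Vex p = 0 \<longleftrightarrow> nash_eq (fitness Dex selex) p"
        unfolding Vex_zero nash_ex_iff[OF p] fz_def by (rule arith_nash[OF s])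
    qed
  qed
  show "\<exists>x. dyn_solution Vex x \<and> x 0 = x0" if "x0 \<in> pop_simplex" for x0
    by (rule sol_ex[OF that])
qed


lemma fit_vert_ex: "fitness Dex selex (vert b) $ b = 1"
proof -
  have "Nrm (vert b) = 1" by (cases b) (simp_all add: Nrm_def vert_nth)
  then show ?thesis using fit_ex[OF vert_simplex[of b]] by (cases b) (simp_all add: Gex_def vert_nth)
qed

lemma example:
  "oracle_game Dex Hex selex \<and> admissible_dynamics (fitness Dex selex) Vex \<and>
   (\<exists>q1 q2. q1 \<noteq> q2 \<and> stable_eq (fitness Dex selex) Vex q1 \<and> stable_eq (fitness Dex selex) Vex q2) \<and>
   (\<exists>q. nash_eq (fitness Dex selex) q \<and> card (pop_supp q) \<ge> 2)"
proof (intro conjI)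
  show g: "oracle_game Dex Hex selex" by (rule game_ex)
  show a: "admissible_dynamics (fitness Dex selex) Vex" by (rule adm_ex)
  interpret agame "fitness Dex selex" Vex by (rule game_agame[OF g a])
  have km: "fitness Dex selex (vert j) $ j \<le> fitness Dex selex (vert b) $ b" for j b
    by (simp add: fit_vert_ex)
  have "vert True \<noteq> (vert False :: real ^ bool)"
  proof
    assume "vert True = (vert False :: real ^ bool)"
    then have "vert True $ True = (vert False :: real ^ bool) $ True" by simp
    then show False by (simp add: vert_nth)
  qed
  then show "\<exists>q1 q2. q1 \<noteq> q2 \<and> stable_eq (fitness Dex selex) Vex q1 \<and> stable_eq (fitness Dex selex) Vex q2"
    using vert_stable[of True, OF km] vert_stable[of False, OF km] by blast
  define q :: "real ^ bool" where "q = (\<chi> b. 1/2)"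
  have qS: "q \<in> pop_simplex" by (simp add: simplex_bool q_def)
  have "nash_eq (fitness Dex selex) q" unfolding nash_ex_iff[OF qS] by (simp add: q_def)
  moreover have "pop_supp q = UNIV" by (auto simp: pop_supp_def q_def)
  ultimately show "\<exists>q. nash_eq (fitness Dex selex) q \<and> card (pop_supp q) \<ge> 2"
    by (intro exI[of _ q]) (simp add: UNIV_bool)
qed




theorem theorem1:
  fixes D :: "'k::finite \<Rightarrow> ('x \<times> 'y) measure"
    and H :: "('x \<Rightarrow> 'y) set"
    and sel :: "real ^ 'k \<Rightarrow> ('x \<Rightarrow> 'y)"
    and V :: "real ^ 'k \<Rightarrow> real ^ 'k"
  assumes game: "oracle_game D H sel"
    and dyn: "admissible_dynamics (fitness D sel) V"
  shows
    \<comment> \<open>(1) accuracy is non-decreasing along trajectories\<close>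
    "(\<forall>x. dyn_solution V x \<longrightarrow> mono_on {0..} (\<lambda>t. mix_acc D (x t) (sel (x t))))
     \<comment> \<open>(2) a stable equilibrium exists\<close>
     \<and> (\<exists>q. stable_eq (fitness D sel) V q)
     \<comment> \<open>(2) there can be multiple stable equilibria\<close>
     \<and> (\<exists>(D' :: bool \<Rightarrow> (real \<times> bool) measure) (H' :: (real \<Rightarrow> bool) set)
          (sel' :: real ^ bool \<Rightarrow> (real \<Rightarrow> bool)) (V' :: real ^ bool \<Rightarrow> real ^ bool).
          oracle_game D' H' sel' \<and> admissible_dynamics (fitness D' sel') V' \<and>
          (\<exists>q1 q2. q1 \<noteq> q2 \<and> stable_eq (fitness D' sel') V' q1 \<and> stable_eq (fitness D' sel') V' q2))
     \<comment> \<open>(3) competitive exclusion\<close>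
     \<and> (\<forall>q. stable_eq (fitness D sel) V q \<longrightarrow> card (pop_supp q) = 1)
     \<comment> \<open>(4) coexistence equilibria may exist\<close>
     \<and> (\<exists>(D' :: bool \<Rightarrow> (real \<times> bool) measure) (H' :: (real \<Rightarrow> bool) set)
          (sel' :: real ^ bool \<Rightarrow> (real \<Rightarrow> bool)) (V' :: real ^ bool \<Rightarrow> real ^ bool).
          oracle_game D' H' sel' \<and> admissible_dynamics (fitness D' sel') V' \<and>
          (\<exists>q. nash_eq (fitness D' sel') q \<and> card (pop_supp q) \<ge> 2))
     \<comment> \<open>(4) ... but they are unstable\<close>
     \<and> (\<forall>q. nash_eq (fitness D sel) q \<and> card (pop_supp q) \<ge> 2 \<longrightarrow> \<not> stable_eq (fitness D sel) V q)"
  proof -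
  have G: "(\<forall>x. dyn_solution V x \<longrightarrow> mono_on {0..} (\<lambda>t. mix_acc D (x t) (sel (x t))))
     \<and> (\<exists>q. stable_eq (fitness D sel) V q)
     \<and> (\<forall>q. stable_eq (fitness D sel) V q \<longrightarrow> card (pop_supp q) = 1)
     \<and> (\<forall>q. nash_eq (fitness D sel) q \<and> card (pop_supp q) \<ge> 2 \<longrightarrow> \<not> stable_eq (fitness D sel) V q)"
    by (rule main_general[OF game dyn])
  have E: "oracle_game Dex Hex selex \<and> admissible_dynamics (fitness Dex selex) Vex \<and>
   (\<exists>q1 q2. q1 \<noteq> q2 \<and> stable_eq (fitness Dex selex) Vex q1 \<and> stable_eq (fitness Dex selex) Vex q2) \<and>
   (\<exists>q. nash_eq (fitness Dex selex) q \<and> card (pop_supp q) \<ge> 2)"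
    by (rule example)
  have E1: "\<exists>(D' :: bool \<Rightarrow> (real \<times> bool) measure) (H' :: (real \<Rightarrow> bool) set)
          (sel' :: real ^ bool \<Rightarrow> (real \<Rightarrow> bool)) (V' :: real ^ bool \<Rightarrow> real ^ bool).
          oracle_game D' H' sel' \<and> admissible_dynamics (fitness D' sel') V' \<and>
          (\<exists>q1 q2. q1 \<noteq> q2 \<and> stable_eq (fitness D' sel') V' q1 \<and> stable_eq (fitness D' sel') V' q2)"
    using E by blast
  have E2: "\<exists>(D' :: bool \<Rightarrow> (real \<times> bool) measure) (H' :: (real \<Rightarrow> bool) set)
          (sel' :: real ^ bool \<Rightarrow> (real \<Rightarrow> bool)) (V' :: real ^ bool \<Rightarrow> real ^ bool).
          oracle_game D' H' sel' \<and> admissible_dynamics (fitness D' sel') V' \<and>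
          (\<exists>q. nash_eq (fitness D' sel') q \<and> card (pop_supp q) \<ge> 2)"
    using E by blast
  show ?thesis using G E1 E2 by blast
qed


end
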